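(* Consider binary classification: $(x,y)$ is drawn from a data distribution with label $y\in\{0,1\}$, and a victim model outputs $\hat p(x)\in[0,1]$, its predicted probability of class $1$ (the watermark target class). Assume $\hat p$ is calibrated, i.e. $\mathbb{E}[y\mid \hat p(x)=a]=a$ for all $0\le a\le 1$. Let $\varepsilon\ge 0$ be the watermark level, $f_w\in\mathbb{R}$ a frequency, and $z(x)=\cos\left(f_w\, g(\mathbf{v}_k,x,\mathbf{M})\right)\in[-1,1]$, where $g(\mathbf{v}_k,x,\mathbf{M})\in[0,1)$ is a hash value determined by the random watermark key. Let $\tau\in[0,1]$ be the data selection ratio: under the randomness of the key, each input $x$ is selected for watermarking with probability $\tau$, independently of everything else. Define: - $\mathrm{Acc}(\text{Victim})=\mathbb{P}\big(\mathbb{1}\{\hat p(x)>0.5\}=y\big)$; - the argmax soft label: on a selected input, $\hat y_s=\mathbb{1}\left\{\frac{\hat p(x)+\varepsilon(1+z(x))}{1+2\varepsilon}>0.5\right\}$, and on a non-selected input $\hat y_s=\mathbb{1}\{\hat p(x)>0.5\}$, with $\mathrm{Acc}(\text{Argmax Soft})=\mathbb{P}(\hat y_s=y)$; - the sampling hard label: on a selected input, $\hat y_h\sim\mathrm{Ber}\left(\frac{\hat p(x)+\varepsilon(1+z(x))}{1+2\varepsilon}\right)$, drawn conditionally independently of $y$ given $x$, and on a non-selected input $\hat y_h=\mathbb{1}\{\hat p(x)>0.5\}$, with $\mathrm{Acc}(\text{Sampling Hard})=\mathbb{P}(\hat y_h=y)$. Then, with expectations over the random watermark key, $$\mathbb{E}\left[\mathrm{Acc}(\text{Argmax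 Soft})\right]\ \ge\ \mathrm{Acc}(\text{Victim})-\tau(0.5+\varepsilon)\,\mathbb{P}\left[0.5-\varepsilon\le \hat p(x)\le 0.5+\varepsilon\right],$$ $$\mathbb{E}\left[\mathrm{Acc}(\text{Sampling Hard})\right]\ \ge\ (1-\tau)\,\mathrm{Acc}(\text{Victim})+\frac{\tau}{1+2\varepsilon}\,\mathbb{E}\left[2\hat p(x)^2-2\hat p(x)+1\right].$$
   Context: This is the setting of a watermarking scheme for a classification API. The watermark key is random: $\mathbf{v}_k,\mathbf{v}_s\in\mathbb{R}^n$ have i.i.d. $\mathcal{U}[0,1)$ entries and $\mathbf{M}$ has i.i.d. $\mathcal{N}(0,1)$ entries; $g(\mathbf{v},x,\mathbf{M})\in[0,1)$ denotes a hash of the input $x$ obtained from $\mathbf{v}^\top\mathbf{M}_{i(x)}$ (where $\mathbf{M}_{i(x)}$ is the row of $\mathbf{M}$ indexed by a token of $x$) via the probability integral transform. An input $x$ is selected for watermarking when $g(\mathbf{v}_s,x,\mathbf{M})\le\tau$; the paper models this as each input being selected with probability $\tau$ independently of everything else. On selected inputs the victim's class-1 probability $\hat p$ is replaced by $\frac{\hat p+\varepsilon(1+z(x))}{1+2\varepsilon}$. The "argmax soft" output is the argmax of the (possibly watermarked) probabilities; the "sampling hard" output is a one-hot label sampled from the watermarked probabilities. *)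

theory Defs
  imports "HOL-Probability.Probability"
begin

text \<open>Data distribution D on pairs (x, y) with x an input (in the measurable
space X) and y :: bool the label (True = class 1, the watermark target class).
phat x is the victim's predicted probability of class 1.
The random watermark key k is drawn from the probability space K.\<close>

text \<open>Calibration E[y | phat(x)] = phat(x), written out via the defining
property of conditional expectation w.r.t. the sigma-algebra generated by phat.\<close>
definition calibrated :: "('x \<times> bool) measure \<Rightarrow> ('x \<Rightarrow> real) \<Rightarrow> bool" where
  "calibrated D phat \<longleftrightarrow>
     (\<forall>B \<in> sets borel.
        (\<integral>w. of_bool (snd w) * indicator B (phat (fst w)) \<partial>D) =
        (\<integral>w. phat (fst w) * indicator B (phat (fst w)) \<partial>D))"

definition wm_prob :: "real \<Rightarrow> real \<Rightarrow> real \<Rightarrow> real" where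
  "wm_prob eps p zv = (p + eps * (1 + zv)) / (1 + 2 * eps)"

definition zwm :: "real \<Rightarrow> ('k \<Rightarrow> 'x \<Rightarrow> real) \<Rightarrow> 'k \<Rightarrow> 'x \<Rightarrow> real" where
  "zwm fw g k x = cos (fw * g k x)"

definition victim_label :: "('x \<Rightarrow> real) \<Rightarrow> 'x \<Rightarrow> bool" where
  "victim_label phat x = (phat x > 1/2)"

definition acc_victim :: "('x \<times> bool) measure \<Rightarrow> ('x \<Rightarrow> real) \<Rightarrow> real" where
  "acc_victim D phat = measure D {w \<in> space D. victim_label phat (fst w) = snd w}"

definition argmax_soft_label ::
  "real \<Rightarrow> real \<Rightarrow> ('k \<Rightarrow> 'x \<Rightarrow> real) \<Rightarrow> ('k \<Rightarrow> 'x \<Rightarrow> bool) \<Rightarrow> ('x \<Rightarrow> real) \<Rightarrow> 'k \<Rightarrow> 'x \<Rightarrow> bool" where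
  "argmax_soft_label eps fw g sel phat k x =
     (if sel k x then wm_prob eps (phat x) (zwm fw g k x) > 1/2 else victim_label phat x)"

definition acc_argmax_soft ::
  "('x \<times> bool) measure \<Rightarrow> real \<Rightarrow> real \<Rightarrow> ('k \<Rightarrow> 'x \<Rightarrow> real) \<Rightarrow> ('k \<Rightarrow> 'x \<Rightarrow> bool) \<Rightarrow> ('x \<Rightarrow> real) \<Rightarrow> 'k \<Rightarrow> real" where
  "acc_argmax_soft D eps fw g sel phat k =
     measure D {w \<in> space D. argmax_soft_label eps fw g sel phat k (fst w) = snd w}"

definition sampling_hard_dist ::
  "real \<Rightarrow> real \<Rightarrow> ('k \<Rightarrow> 'x \<Rightarrow> real) \<Rightarrow> ('k \<Rightarrow> 'x \<Rightarrow> bool) \<Rightarrow> ('x \<Rightarrow> real) \<Rightarrow> 'k \<Rightarrow> 'x \<Rightarrow> bool pmf" where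
  "sampling_hard_dist eps fw g sel phat k x =
     (if sel k x then bernoulli_pmf (wm_prob eps (phat x) (zwm fw g k x))
      else return_pmf (victim_label phat x))"

text \<open>P(yh = y) for key k, where yh ~ sampling_hard_dist independently of y given x.\<close>
definition acc_sampling_hard ::
  "('x \<times> bool) measure \<Rightarrow> real \<Rightarrow> real \<Rightarrow> ('k \<Rightarrow> 'x \<Rightarrow> real) \<Rightarrow> ('k \<Rightarrow> 'x \<Rightarrow> bool) \<Rightarrow> ('x \<Rightarrow> real) \<Rightarrow> 'k \<Rightarrow> real" where
  "acc_sampling_hard D eps fw g sel phat k =
     (\<integral>w. measure_pmf.prob (sampling_hard_dist eps fw g sel phat k (fst w)) {snd w} \<partial>D)"

end

theory Submission
  imports Defs
begin


lemma meas_eq_int: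
  fixes D :: "'a measure"
  shows "measure D {w \<in> space D. P w} = (\<integral>w. of_bool (P w) \<partial>D)"
proof -
  have "measure D {w \<in> space D. P w} = (\<integral>w. indicator {w \<in> space D. P w} w \<partial>D)"
    by (simp add: Int_absorb2 subset_iff)
  also have "\<dots> = (\<integral>w. of_bool (P w) \<partial>D)"
    by (rule Bochner_Integration.integral_cong) (auto simp: indicator_def)
  finally show ?thesis .
qed

lemma int_bdd:
  fixes f :: "'a \<Rightarrow> real"
  assumes "finite_measure M" "f \<in> borel_measurable M" "\<And>x. x \<in> space M \<Longrightarrow> \<bar>f x\<bar> \<le> B"
  shows "integrable M f"
  using finite_measure.integrable_const_bound[OF assms(1), of f B] assms(2,3) by (auto intro: AE_I2)

lemma calib_sq:
  fixes D :: "'a measure" and q :: "'a \<Rightarrow> real" and Y :: "'a \<Rightarrow> real"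
  assumes D: "prob_space D"
    and qm[measurable]: "q \<in> borel_measurable D" and Ym[measurable]: "Y \<in> borel_measurable D"
    and qr: "\<And>w. w \<in> space D \<Longrightarrow> 0 \<le> q w \<and> q w \<le> 1"
    and Yr: "\<And>w. w \<in> space D \<Longrightarrow> 0 \<le> Y w \<and> Y w \<le> 1"
    and cal: "\<And>B. B \<in> sets borel \<Longrightarrow> (\<integral>w. Y w * indicator B (q w) \<partial>D) = (\<integral>w. q w * indicator B (q w) \<partial>D)"
  shows "(\<integral>w. Y w * q w \<partial>D) \<ge> (\<integral>w. (q w)\<^sup>2 \<partial>D)"
proof -
  interpret prob_space D by fact
  have intb: "integrable D f" if "f \<in> borel_measurable D" "\<And>w. w \<in> space D \<Longrightarrow> \<bar>f w\<bar> \<le> 1"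
    for f :: "'a \<Rightarrow> real"
    using int_bdd[of D f 1] that by (simp add: finite_measure_axioms)
  have key: "(\<integral>w. Y w * q w \<partial>D) \<ge> (\<integral>w. (q w)\<^sup>2 \<partial>D) - 1 / real n" if n: "n > 0" for n :: nat
  proof -
    define B where "B j = {t::real. floor (real n * t) = int j}" for j :: nat
    have Bm[measurable]: "B j \<in> sets borel" for j unfolding B_def by measurable
    define phi where "phi t = real_of_int (floor (real n * t)) / real n" for t
    have phi_sum: "phi t = (\<Sum>j\<in>{0..n}. real j / real n * indicator (B j) t)" if t: "0 \<le> t" "t \<le> 1" for t
    proof -
      have "0 \<le> floor (real n * t)" using t by simp
      moreover have "real n * t \<le> real n" using t by (simp add: mult_left_le)
      then have "floor (real n * t) \<le> int n"
        by (metis floor_mono floor_of_nat)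
      ultimately obtain m where m: "floor (real n * t) = int m" "m \<le> n"
        by (metis nat_0_le nat_le_iff)
      have "(\<Sum>j\<in>{0..n}. real j / real n * indicator (B j) t) = (\<Sum>j\<in>{0..n}. if j = m then real m / real n else 0)"
        by (rule sum.cong) (auto simp: B_def indicator_def m(1))
      also have "\<dots> = real m / real n" using m(2) by simp
      finally show ?thesis unfolding phi_def using m(1) by simp
    qed
    have phi_le: "phi t \<le> t" for t
      using n unfolding phi_def by (simp add: divide_le_eq mult.commute)
    have phi_ge: "phi t \<ge> t - 1 / real n" for t
    proof -
      have "real n * t - 1 \<le> real_of_int (floor (real n * t))" by linarith
      then have "(real n * t - 1) / real n \<le> real_of_int (floor (real n * t)) / real n"
        using n by (simp add: divide_right_mono)
      moreover have "(real n * t - 1) / real n = t - 1 / real n" using n by (simp add: field_simps)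
      ultimately show ?thesis unfolding phi_def by simp
    qed
    have m_phi[measurable]: "(\<lambda>w. phi (q w)) \<in> borel_measurable D" unfolding phi_def by measurable
    have "(\<integral>w. Y w * phi (q w) \<partial>D) = (\<integral>w. (\<Sum>j\<in>{0..n}. real j / real n * (Y w * indicator (B j) (q w))) \<partial>D)"
      by (rule Bochner_Integration.integral_cong) (auto simp: phi_sum qr sum_distrib_left algebra_simps)
    also have "\<dots> = (\<Sum>j\<in>{0..n}. (\<integral>w. real j / real n * (Y w * indicator (B j) (q w)) \<partial>D))"
      by (rule Bochner_Integration.integral_sum[where I="{0..n}" and f="\<lambda>j w. real j / real n * (Y w * indicator (B j) (q w))"]) (rule integrable_mult_right, rule intb, measurable, auto simp: Yr indicator_def abs_le_iff)
    also have "\<dots> = (\<Sum>j\<in>{0..n}. real j / real n * (\<integral>w. Y w * indicator (B j) (q w) \<partial>D))"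
      by simp
    also have "\<dots> = (\<Sum>j\<in>{0..n}. real j / real n * (\<integral>w. q w * indicator (B j) (q w) \<partial>D))"
      using cal Bm by simp
    also have "\<dots> = (\<Sum>j\<in>{0..n}. (\<integral>w. real j / real n * (q w * indicator (B j) (q w)) \<partial>D))"
      by simp
    also have "\<dots> = (\<integral>w. (\<Sum>j\<in>{0..n}. real j / real n * (q w * indicator (B j) (q w))) \<partial>D)"
      by (rule Bochner_Integration.integral_sum[where I="{0..n}" and f="\<lambda>j w. real j / real n * (q w * indicator (B j) (q w))", symmetric]) (rule integrable_mult_right, rule intb, measurable, auto simp: qr indicator_def abs_le_iff)
    also have "\<dots> = (\<integral>w. q w * phi (q w) \<partial>D)"
      by (rule Bochner_Integration.integral_cong) (auto simp: phi_sum qr sum_distrib_left algebra_simps)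
    finally have eq: "(\<integral>w. Y w * phi (q w) \<partial>D) = (\<integral>w. q w * phi (q w) \<partial>D)" .
    have bphi: "\<bar>phi (q w)\<bar> \<le> 1" if "w \<in> space D" for w
    proof -
      have "0 \<le> phi (q w)" unfolding phi_def using qr[OF that] by simp
      moreover have "phi (q w) \<le> 1" using phi_le[of "q w"] qr[OF that] by linarith
      ultimately show ?thesis by simp
    qed
    have n1: "1 / real n \<le> 1" using n by simp
    have iYphi: "integrable D (\<lambda>w. Y w * phi (q w))"
      by (rule intb, measurable) (use Yr bphi in \<open>auto simp: abs_mult intro!: mult_le_one\<close>)
    have iYq: "integrable D (\<lambda>w. Y w * q w)"
      by (rule intb, measurable) (use Yr qr in \<open>auto simp: abs_mult intro!: mult_le_one\<close>)
    have iqphi: "integrable D (\<lambda>w. q w * phi (q w))"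
      by (rule intb, measurable) (use qr bphi in \<open>auto simp: abs_mult intro!: mult_le_one\<close>)
    have iqq: "integrable D (\<lambda>w. q w * (q w - 1 / real n))"
    proof (rule intb, measurable)
      fix w assume w: "w \<in> space D"
      have "\<bar>q w - 1 / real n\<bar> \<le> 1" using qr[OF w] n1 unfolding abs_le_iff
        by (smt (verit) divide_nonneg_nonneg of_nat_0_le_iff)
      then show "\<bar>q w * (q w - 1 / real n)\<bar> \<le> 1" using qr[OF w] by (auto simp: abs_mult intro!: mult_le_one)
    qed
    have i1: "(\<integral>w. Y w * phi (q w) \<partial>D) \<le> (\<integral>w. Y w * q w \<partial>D)"
      by (rule integral_mono[OF iYphi iYq]) (use Yr phi_le in \<open>simp add: mult_left_mono\<close>)
    have i2: "(\<integral>w. q w * (q w - 1 / real n) \<partial>D) \<le> (\<integral>w. q w * phi (q w) \<partial>D)"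
      by (rule integral_mono[OF iqq iqphi]) (use qr phi_ge in \<open>simp add: mult_left_mono\<close>)
    have i3: "(\<integral>w. q w * (q w - 1 / real n) \<partial>D) = (\<integral>w. (q w)\<^sup>2 \<partial>D) - (\<integral>w. q w \<partial>D) / real n"
    proof -
      have "(\<integral>w. q w * (q w - 1 / real n) \<partial>D) = (\<integral>w. (q w)\<^sup>2 - q w / real n \<partial>D)"
        by (simp add: algebra_simps power2_eq_square)
      also have "\<dots> = (\<integral>w. (q w)\<^sup>2 \<partial>D) - (\<integral>w. q w / real n \<partial>D)"
      proof (rule Bochner_Integration.integral_diff)
        show "integrable D (\<lambda>w. (q w)\<^sup>2)"
          by (rule intb, measurable) (use qr in \<open>auto simp: abs_le_iff power_le_one\<close>)
        show "integrable D (\<lambda>w. q w / real n)"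
          by (rule integrable_divide, rule intb, measurable) (use qr in \<open>auto simp: abs_le_iff\<close>)
      qed
      finally show ?thesis by simp
    qed
    have "(\<integral>w. q w \<partial>D) \<le> 1"
      using integral_mono[of D q "\<lambda>_. 1"] qr intb[OF qm] by (simp add: abs_le_iff prob_space)
    then have "(\<integral>w. q w \<partial>D) / real n \<le> 1 / real n" using n by (simp add: divide_right_mono)
    then show ?thesis using i1 i2 i3 eq by linarith
  qed
  show ?thesis
  proof (rule ccontr)
    assume "\<not> ?thesis"
    then have d: "(\<integral>w. (q w)\<^sup>2 \<partial>D) - (\<integral>w. Y w * q w \<partial>D) > 0" by simp
    obtain m :: nat where "inverse (real (Suc m)) < (\<integral>w. (q w)\<^sup>2 \<partial>D) - (\<integral>w. Y w * q w \<partial>D)"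
      using reals_Archimedean[OF d] by blast
    with key[of "Suc m"] show False by (simp add: inverse_eq_divide)
  qed
qed


theorem theorem1:
  fixes X :: "'x measure" and D :: "('x \<times> bool) measure" and K :: "'k measure"
    and phat :: "'x \<Rightarrow> real" and g :: "'k \<Rightarrow> 'x \<Rightarrow> real"
    and sel :: "'k \<Rightarrow> 'x \<Rightarrow> bool"
    and eps fw tau :: real
  assumes D_prob: "prob_space D"
    and D_sets: "sets D = sets (X \<Otimes>\<^sub>M count_space UNIV)"
    and K_prob: "prob_space K"
    and phat_meas: "phat \<in> borel_measurable X"
    and phat_range: "\<forall>x \<in> space X. 0 \<le> phat x \<and> phat x \<le> 1"
    and calib: "calibrated D phat"
    and eps_nonneg: "0 \<le> eps"
    and g_meas: "(\<lambda>(k, x). g k x) \<in> borel_measurable (K \<Otimes>\<^sub>M X)"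
    and g_range: "\<forall>k \<in> space K. \<forall>x \<in> space X. 0 \<le> g k x \<and> g k x < 1"
    and sel_meas: "(\<lambda>(k, x). sel k x) \<in> measurable (K \<Otimes>\<^sub>M X) (count_space UNIV)"
    and tau_range: "0 \<le> tau" "tau \<le> 1"
    and sel_prob: "\<forall>x \<in> space X. measure K {k \<in> space K. sel k x} = tau"
    and sel_indep: "\<forall>x \<in> space X.
        prob_space.indep_var K borel (\<lambda>k. of_bool (sel k x) :: real) borel (\<lambda>k. g k x)"
  shows "(\<integral>k. acc_argmax_soft D eps fw g sel phat k \<partial>K)
           \<ge> acc_victim D phat
             - tau * (1/2 + eps) *
               measure D {w \<in> space D. 1/2 - eps \<le> phat (fst w) \<and> phat (fst w) \<le> 1/2 + eps}
       \<and> (\<integral>k. acc_sampling_hard D eps fw g sel phat k \<partial>K)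
           \<ge> (1 - tau) * acc_victim D phat
             + tau / (1 + 2 * eps) *
               (\<integral>w. 2 * (phat (fst w))\<^sup>2 - 2 * phat (fst w) + 1 \<partial>D)"
proof -
  interpret D: prob_space D by (rule D_prob)
  interpret K: prob_space K by (rule K_prob)
  interpret KD: pair_prob_space K D by unfold_locales
  have spD: "space D = space X \<times> UNIV"
    using sets_eq_imp_space_eq[OF D_sets] by (simp add: space_pair_measure)
  have fstX: "fst w \<in> space X" if "w \<in> space D" for w using that spD by auto
  have mfst[measurable]: "fst \<in> measurable D X"
    using measurable_cong_sets[OF D_sets refl] measurable_fst by blast
  have msnd[measurable]: "snd \<in> measurable D (count_space UNIV)"
    using measurable_cong_sets[OF D_sets refl] measurable_snd by blast
  note phat_meas[measurable]
  have mpair: "(\<lambda>p. (fst p, fst (snd p))) \<in> measurable (K \<Otimes>\<^sub>M D) (K \<Otimes>\<^sub>M X)"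
    by measurable
  have msel[measurable]: "(\<lambda>p. sel (fst p) (fst (snd p))) \<in> measurable (K \<Otimes>\<^sub>M D) (count_space UNIV)"
    using measurable_compose[OF mpair sel_meas] by (simp add: case_prod_beta)
  have mg[measurable]: "(\<lambda>p. g (fst p) (fst (snd p))) \<in> borel_measurable (K \<Otimes>\<^sub>M D)"
    using measurable_compose[OF mpair g_meas] by (simp add: case_prod_beta)
  have slice: "(\<lambda>w. f (k, w)) \<in> borel_measurable D"
    if "f \<in> borel_measurable (K \<Otimes>\<^sub>M D)" "k \<in> space K" for f :: "_ \<Rightarrow> real" and k
    using measurable_compose[OF measurable_Pair1'[OF that(2)] that(1)] by simp
  have intD: "integrable D f" if "f \<in> borel_measurable D" "\<And>w. w \<in> space D \<Longrightarrow> \<bar>f w\<bar> \<le> 1"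
    for f :: "_ \<Rightarrow> real"
    using int_bdd[of D f 1] that D.finite_measure_axioms by simp
  have intKD: "integrable (K \<Otimes>\<^sub>M D) f" if "f \<in> borel_measurable (K \<Otimes>\<^sub>M D)"
      "\<And>p. p \<in> space (K \<Otimes>\<^sub>M D) \<Longrightarrow> \<bar>f p\<bar> \<le> 1"
    for f :: "_ \<Rightarrow> real"
    using int_bdd[of "K \<Otimes>\<^sub>M D" f 1] that KD.P.finite_measure_axioms by simp
  define V where "V w = (of_bool (victim_label phat (fst w) = snd w) :: real)" for w :: "'x \<times> bool"
  define Mid where "Mid w = (of_bool (1/2 - eps \<le> phat (fst w) \<and> phat (fst w) \<le> 1/2 + eps) :: real)"
    for w :: "'x \<times> bool"
  define S where "S p = (of_bool (sel (fst p) (fst (snd p))) :: real)" for p :: "'k \<times> 'x \<times> bool"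
  have mV[measurable]: "V \<in> borel_measurable D" unfolding V_def victim_label_def by measurable
  have mMid[measurable]: "Mid \<in> borel_measurable D" unfolding Mid_def by measurable
  have mS[measurable]: "S \<in> borel_measurable (K \<Otimes>\<^sub>M D)" unfolding S_def by measurable

  define q where "q w = phat (fst w)" for w :: "'x \<times> bool"
  define Y where "Y w = (of_bool (snd w) :: real)" for w :: "'x \<times> bool"
  have mq[measurable]: "q \<in> borel_measurable D" unfolding q_def by measurable
  have mY[measurable]: "Y \<in> borel_measurable D" unfolding Y_def by measurable
  have qr: "0 \<le> q w \<and> q w \<le> 1" if "w \<in> space D" for w
    using phat_range fstX[OF that] by (auto simp: q_def)
  have cal: "(\<integral>w. Y w * indicator B (q w) \<partial>D) = (\<integral>w. q w * indicator B (q w) \<partial>D)"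
    if "B \<in> sets borel" for B
    using calib that unfolding calibrated_def Y_def q_def by blast
  have accv: "acc_victim D phat = (\<integral>w. V w \<partial>D)"
    unfolding acc_victim_def V_def by (rule meas_eq_int)
  have intS: "(\<integral>k. S (k, w) \<partial>K) = tau" if "w \<in> space D" for w
    using sel_prob fstX[OF that] meas_eq_int[of K "\<lambda>k. sel k (fst w)"] unfolding S_def by simp

  define A where "A p = (of_bool (argmax_soft_label eps fw g sel phat (fst p) (fst (snd p)) = snd (snd p)) :: real)"
    for p :: "'k \<times> 'x \<times> bool"
  have mA[measurable]: "A \<in> borel_measurable (K \<Otimes>\<^sub>M D)"
    unfolding A_def argmax_soft_label_def wm_prob_def zwm_def victim_label_def by measurable
  have acca: "acc_argmax_soft D eps fw g sel phat k = (\<integral>w. A (k, w) \<partial>D)" for k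
    unfolding acc_argmax_soft_def A_def by (simp add: meas_eq_int)
  have pw: "V w - S (k, w) * Mid w * V w \<le> A (k, w)" if w: "w \<in> space D" for k w
  proof -
    let ?p = "phat (fst w)"
    let ?z = "zwm fw g k (fst w)"
    have z: "-1 \<le> ?z" "?z \<le> 1" by (simp_all add: zwm_def)
    show ?thesis
    proof (cases "sel k (fst w)")
      case False
      then show ?thesis by (simp add: A_def S_def V_def argmax_soft_label_def)
    next
      case True
      show ?thesis
      proof (cases "1/2 - eps \<le> ?p \<and> ?p \<le> 1/2 + eps")
        case True2: True
        then show ?thesis using True by (simp add: A_def S_def V_def Mid_def)
      next
        case False2: False
        have d: "0 < 1 + 2 * eps" using eps_nonneg by simp
        have e1: "0 \<le> eps * (1 + ?z)" using eps_nonneg z by simp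
        have e2: "eps * (1 + ?z) \<le> eps * 2" using eps_nonneg z by (intro mult_left_mono) auto
        have "(wm_prob eps ?p ?z > 1/2) = (?p + eps * (1 + ?z) > (1 + 2 * eps) / 2)"
          unfolding wm_prob_def using d by (simp add: field_simps)
        also have "\<dots> = (?p > 1/2)" using False2 e1 e2 by auto
        finally have "(wm_prob eps ?p ?z > 1/2) = (?p > 1/2)" .
        then show ?thesis using True
          by (simp add: A_def S_def V_def Mid_def argmax_soft_label_def victim_label_def)
      qed
    qed
  qed
  have iA: "integrable (K \<Otimes>\<^sub>M D) A" by (rule intKD) (auto simp: A_def)
  define SMV where "SMV p = S p * (Mid (snd p) * V (snd p))" for p :: "'k \<times> 'x \<times> bool"
  have mSMV[measurable]: "SMV \<in> borel_measurable (K \<Otimes>\<^sub>M D)" unfolding SMV_def by measurable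
  have iSMV: "integrable (K \<Otimes>\<^sub>M D) SMV" by (rule intKD) (auto simp: SMV_def S_def Mid_def V_def)
  have iV: "integrable D V" by (rule intD) (auto simp: V_def)
  have step1: "(\<integral>w. V w \<partial>D) - (\<integral>w. SMV (k, w) \<partial>D) \<le> acc_argmax_soft D eps fw g sel phat k"
    if k: "k \<in> space K" for k
  proof -
    have i2: "integrable D (\<lambda>w. SMV (k, w))"
      by (rule intD, rule slice[OF mSMV k]) (auto simp: SMV_def S_def Mid_def V_def)
    have i3: "integrable D (\<lambda>w. A (k, w))"
      by (rule intD, rule slice[OF mA k]) (auto simp: A_def)
    have "(\<integral>w. V w \<partial>D) - (\<integral>w. SMV (k, w) \<partial>D) = (\<integral>w. V w - SMV (k, w) \<partial>D)"
      by (rule Bochner_Integration.integral_diff[symmetric, OF iV i2])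
    also have "\<dots> \<le> (\<integral>w. A (k, w) \<partial>D)"
      by (rule integral_mono[OF Bochner_Integration.integrable_diff[OF iV i2] i3])
         (use pw in \<open>auto simp: SMV_def mult.assoc\<close>)
    finally show ?thesis by (simp add: acca)
  qed
  have iK1: "integrable K (\<lambda>k. acc_argmax_soft D eps fw g sel phat k)"
    using KD.integrable_fst'[OF iA] by (simp add: acca)
  have iK2: "integrable K (\<lambda>k. \<integral>w. SMV (k, w) \<partial>D)"
    using KD.integrable_fst'[OF iSMV] by simp
  have "(\<integral>k. (\<integral>w. V w \<partial>D) - (\<integral>w. SMV (k, w) \<partial>D) \<partial>K) \<le> (\<integral>k. acc_argmax_soft D eps fw g sel phat k \<partial>K)"
    by (rule integral_mono[OF Bochner_Integration.integrable_diff[OF _ iK2] iK1]) (auto intro: step1)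
  also have "(\<integral>k. (\<integral>w. V w \<partial>D) - (\<integral>w. SMV (k, w) \<partial>D) \<partial>K) = (\<integral>w. V w \<partial>D) - (\<integral>k. (\<integral>w. SMV (k, w) \<partial>D) \<partial>K)"
    by (subst Bochner_Integration.integral_diff[OF _ iK2]) (auto simp: K.prob_space)
  finally have P1a: "(\<integral>w. V w \<partial>D) - (\<integral>k. (\<integral>w. SMV (k, w) \<partial>D) \<partial>K) \<le> (\<integral>k. acc_argmax_soft D eps fw g sel phat k \<partial>K)" .
  have "(\<integral>k. (\<integral>w. SMV (k, w) \<partial>D) \<partial>K) = (\<integral>w. (\<integral>k. SMV (k, w) \<partial>K) \<partial>D)"
    using KD.Fubini_integral[of "\<lambda>k w. SMV (k, w)"] iSMV by (simp add: case_prod_beta')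
  also have "\<dots> = (\<integral>w. tau * (Mid w * V w) \<partial>D)"
  proof (rule Bochner_Integration.integral_cong[OF refl])
    fix w assume w: "w \<in> space D"
    have "(\<integral>k. SMV (k, w) \<partial>K) = (\<integral>k. S (k, w) \<partial>K) * (Mid w * V w)"
      unfolding SMV_def by simp
    then show "(\<integral>k. SMV (k, w) \<partial>K) = tau * (Mid w * V w)" using intS[OF w] by simp
  qed
  also have "\<dots> = tau * (\<integral>w. Mid w * V w \<partial>D)" by simp
  finally have P1b: "(\<integral>k. (\<integral>w. SMV (k, w) \<partial>D) \<partial>K) = tau * (\<integral>w. Mid w * V w \<partial>D)" .
  have MV: "(\<integral>w. Mid w * V w \<partial>D) \<le> (1/2 + eps) * measure D {w \<in> space D. 1/2 - eps \<le> phat (fst w) \<and> phat (fst w) \<le> 1/2 + eps}"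
  proof -
    define B1 where "B1 = {t::real. 1/2 - eps \<le> t \<and> t \<le> 1/2 + eps \<and> 1/2 < t}"
    define B2 where "B2 = {t::real. 1/2 - eps \<le> t \<and> t \<le> 1/2 + eps \<and> \<not> 1/2 < t}"
    have [measurable]: "B1 \<in> sets borel" "B2 \<in> sets borel" unfolding B1_def B2_def by measurable
    have f1: "integrable D (\<lambda>w. Y w * indicator B1 (q w))"
      by (rule intD, measurable) (auto simp: Y_def indicator_def)
    have f2: "integrable D (\<lambda>w. indicator B2 (q w) :: real)"
      by (rule intD, measurable)
    have f3: "integrable D (\<lambda>w. Y w * indicator B2 (q w))"
      by (rule intD, measurable) (auto simp: Y_def indicator_def)
    have g1: "integrable D (\<lambda>w. q w * indicator B1 (q w))"
      by (rule intD, measurable) (use qr in \<open>auto simp: indicator_def\<close>)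
    have g3: "integrable D (\<lambda>w. q w * indicator B2 (q w))"
      by (rule intD, measurable) (use qr in \<open>auto simp: indicator_def\<close>)
    have iMid: "integrable D Mid" by (rule intD) (auto simp: Mid_def)
    have "(\<integral>w. Mid w * V w \<partial>D) = (\<integral>w. Y w * indicator B1 (q w) + (indicator B2 (q w) - Y w * indicator B2 (q w)) \<partial>D)"
      by (rule Bochner_Integration.integral_cong[OF refl])
         (auto simp: Mid_def V_def victim_label_def Y_def q_def B1_def B2_def indicator_def)
    also have "\<dots> = (\<integral>w. Y w * indicator B1 (q w) \<partial>D) + ((\<integral>w. indicator B2 (q w) \<partial>D) - (\<integral>w. Y w * indicator B2 (q w) \<partial>D))"
      by (simp add: Bochner_Integration.integral_add[OF f1 Bochner_Integration.integrable_diff[OF f2 f3]]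
            Bochner_Integration.integral_diff[OF f2 f3])
    also have "\<dots> = (\<integral>w. q w * indicator B1 (q w) \<partial>D) + ((\<integral>w. indicator B2 (q w) \<partial>D) - (\<integral>w. q w * indicator B2 (q w) \<partial>D))"
      using cal by simp
    also have "\<dots> = (\<integral>w. q w * indicator B1 (q w) + (indicator B2 (q w) - q w * indicator B2 (q w)) \<partial>D)"
      by (simp add: Bochner_Integration.integral_add[OF g1 Bochner_Integration.integrable_diff[OF f2 g3]]
            Bochner_Integration.integral_diff[OF f2 g3])
    also have "\<dots> \<le> (\<integral>w. (1/2 + eps) * Mid w \<partial>D)"
    proof (rule integral_mono)
      show "integrable D (\<lambda>w. q w * indicator B1 (q w) + (indicator B2 (q w) - q w * indicator B2 (q w)))"
        using g1 f2 g3 by simp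
      show "integrable D (\<lambda>w. (1/2 + eps) * Mid w)" using iMid by simp
      fix w assume "w \<in> space D"
      then show "q w * indicator B1 (q w) + (indicator B2 (q w) - q w * indicator B2 (q w)) \<le> (1/2 + eps) * Mid w"
        using eps_nonneg by (auto simp: Mid_def q_def B1_def B2_def indicator_def)
    qed
    also have "\<dots> = (1/2 + eps) * measure D {w \<in> space D. 1/2 - eps \<le> phat (fst w) \<and> phat (fst w) \<le> 1/2 + eps}"
      by (simp add: Mid_def meas_eq_int)
    finally show ?thesis .
  qed
  have P1: "(\<integral>k. acc_argmax_soft D eps fw g sel phat k \<partial>K)
           \<ge> acc_victim D phat
             - tau * (1/2 + eps) *
               measure D {w \<in> space D. 1/2 - eps \<le> phat (fst w) \<and> phat (fst w) \<le> 1/2 + eps}"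
  proof -
    have "tau * (\<integral>w. Mid w * V w \<partial>D) \<le> tau * ((1/2 + eps) * measure D {w \<in> space D. 1/2 - eps \<le> phat (fst w) \<and> phat (fst w) \<le> 1/2 + eps})"
      using MV tau_range by (intro mult_left_mono) auto
    then show ?thesis using P1a P1b accv by (simp add: mult.assoc)
  qed

  define W where "W p = wm_prob eps (phat (fst (snd p))) (zwm fw g (fst p) (fst (snd p)))"
    for p :: "'k \<times> 'x \<times> bool"
  define F where "F p = (if sel (fst p) (fst (snd p)) then (if snd (snd p) then W p else 1 - W p) else V (snd p))"
    for p :: "'k \<times> 'x \<times> bool"
  have mF[measurable]: "F \<in> borel_measurable (K \<Otimes>\<^sub>M D)"
    unfolding F_def W_def wm_prob_def zwm_def by measurable
  have d: "0 < 1 + 2 * eps" using eps_nonneg by simp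
  have Wb: "eps * (1 + zwm fw g k x) \<le> eps * 2" "0 \<le> eps * (1 + zwm fw g k x)" for k x
  proof -
    have c: "-1 \<le> zwm fw g k x" "zwm fw g k x \<le> 1" by (simp_all add: zwm_def)
    show "eps * (1 + zwm fw g k x) \<le> eps * 2" using eps_nonneg c by (intro mult_left_mono) auto
    show "0 \<le> eps * (1 + zwm fw g k x)" using eps_nonneg c by simp
  qed
  have Wr: "0 \<le> W (k, w) \<and> W (k, w) \<le> 1" if w: "w \<in> space D" for k w
  proof -
    have "0 \<le> q w" "q w \<le> 1" using qr[OF w] by auto
    then show ?thesis using d Wb[of k "fst w"]
      by (auto simp: W_def wm_prob_def q_def field_simps)
  qed
  have accs: "acc_sampling_hard D eps fw g sel phat k = (\<integral>w. F (k, w) \<partial>D)" for k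
    unfolding acc_sampling_hard_def
    by (rule Bochner_Integration.integral_cong[OF refl])
       (use Wr in \<open>auto simp: F_def W_def sampling_hard_dist_def measure_pmf_single V_def victim_label_def\<close>)
  define Hq where "Hq w = (if snd w then q w else 1 - q w)" for w :: "'x \<times> bool"
  have mHq[measurable]: "Hq \<in> borel_measurable D" unfolding Hq_def by measurable
  have Hqr: "0 \<le> Hq w \<and> Hq w \<le> 1" if "w \<in> space D" for w using qr[OF that] by (auto simp: Hq_def)
  have Hqd: "0 \<le> Hq w / (1 + 2 * eps) \<and> Hq w / (1 + 2 * eps) \<le> 1" if "w \<in> space D" for w
    using Hqr[OF that] d eps_nonneg by (auto simp: field_simps)
  define G where "G p = V (snd p) - S p * (V (snd p) - Hq (snd p) / (1 + 2 * eps))" for p :: "'k \<times> 'x \<times> bool"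
  have mG[measurable]: "G \<in> borel_measurable (K \<Otimes>\<^sub>M D)" unfolding G_def by measurable
  have spKD: "snd p \<in> space D" if "p \<in> space (K \<Otimes>\<^sub>M D)" for p using that by (auto simp: space_pair_measure)
  have iG: "integrable (K \<Otimes>\<^sub>M D) G"
  proof (rule intKD[OF mG])
    fix p assume p: "p \<in> space (K \<Otimes>\<^sub>M D)"
    show "\<bar>G p\<bar> \<le> 1" using Hqd[OF spKD[OF p]] by (auto simp: G_def S_def V_def)
  qed
  have iF: "integrable (K \<Otimes>\<^sub>M D) F"
  proof (rule intKD[OF mF])
    fix p assume p: "p \<in> space (K \<Otimes>\<^sub>M D)"
    obtain k w where pk: "p = (k, w)" by (cases p)
    show "\<bar>F p\<bar> \<le> 1" using Wr[OF spKD[OF p], of k] pk by (auto simp: F_def V_def)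
  qed
  have pwF: "G (k, w) \<le> F (k, w)" if w: "w \<in> space D" for k w
  proof (cases "sel k (fst w)")
    case False
    then show ?thesis by (simp add: G_def F_def S_def)
  next
    case True
    have "0 \<le> q w" "q w \<le> 1" using qr[OF w] by auto
    have W: "W (k, w) = (q w + eps * (1 + zwm fw g k (fst w))) / (1 + 2 * eps)"
      by (simp add: W_def wm_prob_def q_def)
    show ?thesis
    proof (cases "snd w")
      case True2: True
      have "q w / (1 + 2 * eps) \<le> W (k, w)" unfolding W
        using d Wb[of k "fst w"] by (intro divide_right_mono) auto
      then show ?thesis using True True2 by (simp add: G_def F_def S_def Hq_def)
    next
      case False2: False
      have "1 - W (k, w) = (1 + 2 * eps - q w - eps * (1 + zwm fw g k (fst w))) / (1 + 2 * eps)"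
        unfolding W using d by (simp add: field_simps)
      moreover have "(1 - q w) / (1 + 2 * eps) \<le> (1 + 2 * eps - q w - eps * (1 + zwm fw g k (fst w))) / (1 + 2 * eps)"
        using d Wb[of k "fst w"] by (intro divide_right_mono) auto
      ultimately show ?thesis using True False2 by (simp add: G_def F_def S_def Hq_def)
    qed
  qed
  have iK3: "integrable K (\<lambda>k. acc_sampling_hard D eps fw g sel phat k)"
    using KD.integrable_fst'[OF iF] by (simp add: accs)
  have iK4: "integrable K (\<lambda>k. \<integral>w. G (k, w) \<partial>D)"
    using KD.integrable_fst'[OF iG] by simp
  have "(\<integral>k. (\<integral>w. G (k, w) \<partial>D) \<partial>K) \<le> (\<integral>k. acc_sampling_hard D eps fw g sel phat k \<partial>K)"
  proof (rule integral_mono[OF iK4 iK3])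
    fix k assume k: "k \<in> space K"
    have i1: "integrable D (\<lambda>w. G (k, w))"
      by (rule intD[OF slice[OF mG k]]) (use Hqd in \<open>force simp: G_def S_def V_def\<close>)
    have i2: "integrable D (\<lambda>w. F (k, w))"
      by (rule intD[OF slice[OF mF k]]) (use Wr in \<open>auto simp: F_def V_def\<close>)
    show "(\<integral>w. G (k, w) \<partial>D) \<le> acc_sampling_hard D eps fw g sel phat k"
      unfolding accs by (rule integral_mono[OF i1 i2]) (rule pwF)
  qed
  also have "(\<integral>k. (\<integral>w. G (k, w) \<partial>D) \<partial>K) = (\<integral>w. (\<integral>k. G (k, w) \<partial>K) \<partial>D)"
    using KD.Fubini_integral[of "\<lambda>k w. G (k, w)"] iG by (simp add: case_prod_beta')
  also have "\<dots> = (\<integral>w. (1 - tau) * V w + tau / (1 + 2 * eps) * Hq w \<partial>D)"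
  proof (rule Bochner_Integration.integral_cong[OF refl])
    fix w assume w: "w \<in> space D"
    have iS: "integrable K (\<lambda>k. S (k, w))"
      by (rule int_bdd[OF K.finite_measure_axioms, of _ 1])
         (use measurable_compose[OF measurable_Pair2'[OF w] mS] in \<open>auto simp: S_def\<close>)
    have "(\<integral>k. G (k, w) \<partial>K) = V w - (\<integral>k. S (k, w) \<partial>K) * (V w - Hq w / (1 + 2 * eps))"
      unfolding G_def
      by (subst Bochner_Integration.integral_diff) (use iS in \<open>auto simp: K.prob_space\<close>)
    then show "(\<integral>k. G (k, w) \<partial>K) = (1 - tau) * V w + tau / (1 + 2 * eps) * Hq w"
      using intS[OF w] by (simp add: algebra_simps)
  qed
  also have "\<dots> = (1 - tau) * (\<integral>w. V w \<partial>D) + tau / (1 + 2 * eps) * (\<integral>w. Hq w \<partial>D)"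
  proof -
    have iH: "integrable D Hq" by (rule intD[OF mHq]) (use Hqr in auto)
    show ?thesis using iV iH by simp
  qed
  finally have P2a: "(1 - tau) * (\<integral>w. V w \<partial>D) + tau / (1 + 2 * eps) * (\<integral>w. Hq w \<partial>D)
      \<le> (\<integral>k. acc_sampling_hard D eps fw g sel phat k \<partial>K)" .
  have Hbound: "(\<integral>w. 2 * (phat (fst w))\<^sup>2 - 2 * phat (fst w) + 1 \<partial>D) \<le> (\<integral>w. Hq w \<partial>D)"
  proof -
    have iq: "integrable D q" by (rule intD[OF mq]) (use qr in auto)
    have iY: "integrable D Y" by (rule intD[OF mY]) (auto simp: Y_def)
    have iqq: "integrable D (\<lambda>w. (q w)\<^sup>2)"
      by (rule intD, measurable) (use qr in \<open>auto simp: abs_le_iff power_le_one\<close>)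
    have iYq: "integrable D (\<lambda>w. Y w * q w)"
      by (rule intD, measurable) (use qr in \<open>auto simp: Y_def\<close>)
    have Yq: "(\<integral>w. Y w \<partial>D) = (\<integral>w. q w \<partial>D)" using cal[of UNIV] by simp
    have sq: "(\<integral>w. Y w * q w \<partial>D) \<ge> (\<integral>w. (q w)\<^sup>2 \<partial>D)"
      by (rule calib_sq[OF D_prob mq mY qr _ cal]) (auto simp: Y_def)
    have "(\<integral>w. Hq w \<partial>D) = (\<integral>w. 1 - q w - Y w + 2 * (Y w * q w) \<partial>D)"
      by (rule Bochner_Integration.integral_cong[OF refl]) (auto simp: Hq_def Y_def)
    also have "\<dots> = 1 - (\<integral>w. q w \<partial>D) - (\<integral>w. Y w \<partial>D) + 2 * (\<integral>w. Y w * q w \<partial>D)"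
      using iq iY iYq by (simp add: D.prob_space)
    finally have h1: "(\<integral>w. Hq w \<partial>D) = 1 - (\<integral>w. q w \<partial>D) - (\<integral>w. Y w \<partial>D) + 2 * (\<integral>w. Y w * q w \<partial>D)" .
    have "(\<integral>w. 2 * (phat (fst w))\<^sup>2 - 2 * phat (fst w) + 1 \<partial>D) = (\<integral>w. 2 * (q w)\<^sup>2 - 2 * q w + 1 \<partial>D)"
      by (simp add: q_def)
    also have "\<dots> = 2 * (\<integral>w. (q w)\<^sup>2 \<partial>D) - 2 * (\<integral>w. q w \<partial>D) + 1"
      using iq iqq by (simp add: D.prob_space)
    finally show ?thesis using h1 Yq sq by linarith
  qed
  have P2: "(\<integral>k. acc_sampling_hard D eps fw g sel phat k \<partial>K)
           \<ge> (1 - tau) * acc_victim D phat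
             + tau / (1 + 2 * eps) *
               (\<integral>w. 2 * (phat (fst w))\<^sup>2 - 2 * phat (fst w) + 1 \<partial>D)"
  proof -
    have "tau / (1 + 2 * eps) * (\<integral>w. 2 * (phat (fst w))\<^sup>2 - 2 * phat (fst w) + 1 \<partial>D)
        \<le> tau / (1 + 2 * eps) * (\<integral>w. Hq w \<partial>D)"
      using Hbound tau_range d by (intro mult_left_mono) auto
    then show ?thesis unfolding accv using P2a by linarith
  qed
  show ?thesis using P1 P2 by blast
qed
end
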